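(* A commutative loop $Q$ of finite order $n$ has a subloop of even order if and only if $n$ is even.
   Context: A loop is a set $Q$ with a binary operation (juxtaposition) and neutral element $e$ such that for all $a,b$ the equations $ax=b$, $ya=b$ have unique solutions. A subloop is a subset containing $e$ which is itself a loop under the restricted operation. *)

theory Defs
  imports Main
begin

definition loop :: "'a set \<Rightarrow> ('a \<Rightarrow> 'a \<Rightarrow> 'a) \<Rightarrow> 'a \<Rightarrow> bool" where
  "loop Q m e \<longleftrightarrow>
     e \<in> Q \<and>
     (\<forall>a\<in>Q. \<forall>b\<in>Q. m a b \<in> Q) \<and>
     (\<forall>a\<in>Q. m e a = a \<and> m a e = a) \<and>
     (\<forall>a\<in>Q. \<forall>b\<in>Q. \<exists>!x. x \<in> Q \<and> m a x = b) \<and>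
     (\<forall>a\<in>Q. \<forall>b\<in>Q. \<exists>!y. y \<in> Q \<and> m y a = b)"

definition subloop :: "'a set \<Rightarrow> 'a set \<Rightarrow> ('a \<Rightarrow> 'a \<Rightarrow> 'a) \<Rightarrow> 'a \<Rightarrow> bool" where
  "subloop S Q m e \<longleftrightarrow> S \<subseteq> Q \<and> e \<in> S \<and> loop S m e"

definition commutative_loop :: "'a set \<Rightarrow> ('a \<Rightarrow> 'a \<Rightarrow> 'a) \<Rightarrow> 'a \<Rightarrow> bool" where
  "commutative_loop Q m e \<longleftrightarrow> loop Q m e \<and> (\<forall>a\<in>Q. \<forall>b\<in>Q. m a b = m b a)"

end

theory Submission
  imports Defs
begin

lemma inv_parity:
  assumes "finite A" "\<forall>x\<in>A. f x \<in> A \<and> f (f x) = x"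
  shows "even (card A) = even (card {x\<in>A. f x = x})"
  using assms
proof (induction "card A" arbitrary: A rule: less_induct)
  case less
  show ?case
  proof (cases "A = {}")
    case True then show ?thesis by simp
  next
    case False
    then obtain x where x: "x \<in> A" by blast
    show ?thesis
    proof (cases "f x = x")
      case True
      let ?A = "A - {x}"
      have c: "card ?A < card A" using card_Diff1_less[OF less.prems(1) x] .
      have inv: "\<forall>y\<in>?A. f y \<in> ?A \<and> f (f y) = y"
      proof
        fix y assume y: "y \<in> ?A"
        have h: "f y \<in> A \<and> f (f y) = y" using bspec[OF less.prems(2)] y by blast
        have "f y \<noteq> x"
        proof
          assume "f y = x" then have "f (f y) = f x" by simp
          then have "y = x" using h True by simp
          then show False using y by simp
        qed
        then show "f y \<in> ?A \<and> f (f y) = y" using h by blast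
      qed
      have IH: "even (card ?A) = even (card {y\<in>?A. f y = y})"
        using less.hyps[OF c _ inv] less.prems(1) by auto
      have e1: "card A = Suc (card ?A)" using x less.prems(1)
        by (metis card_Suc_Diff1)
      have fs: "{y\<in>A. f y = y} = insert x {y\<in>?A. f y = y}" using x True by auto
      have e2: "card {y\<in>A. f y = y} = Suc (card {y\<in>?A. f y = y})"
        unfolding fs using less.prems(1) by (subst card_insert_disjoint) auto
      show ?thesis using IH e1 e2 by simp
    next
      case False
      let ?A = "A - {x, f x}"
      have fx: "f x \<in> A" using x less.prems(2) by auto
      have e1: "card A = card ?A + 2"
      proof -
        have "card ?A = card A - card {x, f x}" using x fx less.prems(1)
          by (intro card_Diff_subset) auto
        moreover have "card {x, f x} = 2" using False by auto
        moreover have "card {x, f x} \<le> card A" using x fx less.prems(1)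
          by (intro card_mono) auto
        ultimately show ?thesis by simp
      qed
      have c: "card ?A < card A" using e1 by simp
      have inv: "\<forall>y\<in>?A. f y \<in> ?A \<and> f (f y) = y"
      proof
        fix y assume y: "y \<in> ?A"
        have h: "f y \<in> A" "f (f y) = y" using bspec[OF less.prems(2)] y by blast+
        have "f y \<noteq> x" using h y by (metis Diff_iff insertCI)
        have ffx: "f (f x) = x" using less.prems(2) x by blast
        have "f y \<noteq> f x"
        proof
          assume "f y = f x"
          then have "f (f y) = f (f x)" by simp
          then have "y = x" using h ffx by simp
          then show False using y by simp
        qed
        moreover note \<open>f y \<noteq> x\<close>
        ultimately show "f y \<in> ?A \<and> f (f y) = y" using h by auto
      qed
      have IH: "even (card ?A) = even (card {y\<in>?A. f y = y})"
        using less.hyps[OF c _ inv] less.prems(1) by auto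
      have ffx0: "f (f x) = x" using less.prems(2) x by blast
      have fs: "{y\<in>A. f y = y} = {y\<in>?A. f y = y}" using False ffx0 by auto
      show ?thesis using IH e1 fs by simp
    qed
  qed
qed

lemma sq_parity:
  assumes "loop T m e" "\<forall>a\<in>T. \<forall>b\<in>T. m a b = m b a" "finite T" "b \<in> T"
  shows "even (card T) = even (card {x\<in>T. m x x = b})"
proof -
  have L: "\<forall>a\<in>T. \<forall>b\<in>T. \<exists>!y. y \<in> T \<and> m a y = b"
    using assms(1) unfolding loop_def by (elim conjE)
  have ex: "\<exists>!y. y \<in> T \<and> m a y = b" if "a \<in> T" for a
    using L that assms(4) by blast
  define g where "g x = (THE y. y \<in> T \<and> m x y = b)" for x
  have g: "g x \<in> T \<and> m x (g x) = b" if "x \<in> T" for x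
    unfolding g_def by (rule theI'[OF ex[OF that]])
  have gu: "g x = y" if "x \<in> T" "y \<in> T" "m x y = b" for x y
    unfolding g_def by (rule the1_equality[OF ex[OF that(1)]]) (simp add: that)
  have inv: "\<forall>x\<in>T. g x \<in> T \<and> g (g x) = x"
  proof
    fix x assume x: "x \<in> T"
    have gx: "g x \<in> T" "m x (g x) = b" using g[OF x] by auto
    have "m (g x) x = b" using gx assms(2) x by auto
    then have "g (g x) = x" by (rule gu[OF gx(1) x])
    then show "g x \<in> T \<and> g (g x) = x" using gx by simp
  qed
  have fs: "{x\<in>T. g x = x} = {x\<in>T. m x x = b}"
  proof (intro Collect_cong conj_cong refl)
    fix x assume x: "x \<in> T"
    show "(g x = x) = (m x x = b)"
    proof
      assume "g x = x" then show "m x x = b" using g[OF x] by simp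
    next
      assume "m x x = b" then show "g x = x" by (rule gu[OF x x])
    qed
  qed
  show ?thesis using inv_parity[OF assms(3) inv] fs by simp
qed

theorem corollary3p2:
  fixes Q :: "'a set" and m :: "'a \<Rightarrow> 'a \<Rightarrow> 'a" and e :: 'a and n :: nat
  assumes "commutative_loop Q m e"
    and "finite Q"
    and "card Q = n"
  shows "(\<exists>S. subloop S Q m e \<and> even (card S)) \<longleftrightarrow> even n"
proof
  assume "even n"
  moreover have "subloop Q Q m e" using assms(1) unfolding subloop_def commutative_loop_def
    by (simp add: loop_def)
  ultimately show "\<exists>S. subloop S Q m e \<and> even (card S)" using assms(3) by blast
next
  assume "\<exists>S. subloop S Q m e \<and> even (card S)"
  then obtain S where S: "subloop S Q m e" "even (card S)" by blast
  have lQ: "loop Q m e" and cQ: "\<forall>a\<in>Q. \<forall>b\<in>Q. m a b = m b a"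
    using assms(1) unfolding commutative_loop_def by auto
  have SQ: "S \<subseteq> Q" and eS: "e \<in> S" and lS: "loop S m e" using S(1) unfolding subloop_def by auto
  have cS: "\<forall>a\<in>S. \<forall>b\<in>S. m a b = m b a" using cQ SQ by blast
  have fS: "finite S" using SQ assms(2) finite_subset by blast
  have ev: "even (card {x\<in>S. m x x = e})" using sq_parity[OF lS cS fS eS] S(2) by simp
  have idS: "\<forall>a\<in>S. m e a = a \<and> m a e = a" using lS unfolding loop_def by (elim conjE)
  have "e \<in> {x\<in>S. m x x = e}" using eS idS by blast
  have "{x\<in>S. m x x = e} \<noteq> {e}"
  proof
    assume "{x\<in>S. m x x = e} = {e}"
    then have "card {x\<in>S. m x x = e} = 1" by simp
    then show False using ev by simp
  qed
  then obtain a where a: "a \<in> S" "a \<noteq> e" "m a a = e"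
    using \<open>e \<in> {x\<in>S. m x x = e}\<close> by blast
  show "even n"
  proof (rule ccontr)
    assume odd: "odd n"
    have "\<forall>b\<in>Q. odd (card {x\<in>Q. m x x = b})"
      using sq_parity[OF lQ cQ assms(2)] odd assms(3) by auto
    hence ne: "\<forall>b\<in>Q. {x\<in>Q. m x x = b} \<noteq> {}" by (metis card.empty even_zero)
    have cl: "\<forall>a\<in>Q. \<forall>b\<in>Q. m a b \<in> Q" using lQ unfolding loop_def by (elim conjE)
    have surj: "(\<lambda>x. m x x) ` Q = Q"
    proof
      show "(\<lambda>x. m x x) ` Q \<subseteq> Q" using cl by blast
      show "Q \<subseteq> (\<lambda>x. m x x) ` Q"
      proof
        fix b assume "b \<in> Q"
        then obtain x where "x \<in> Q" "m x x = b" using ne by blast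
        then show "b \<in> (\<lambda>x. m x x) ` Q" by blast
      qed
    qed
    hence inj: "inj_on (\<lambda>x. m x x) Q" using assms(2) by (simp add: eq_card_imp_inj_on)
    have eQ: "e \<in> Q" and aQ: "a \<in> Q" using a SQ eS by auto
    have ee: "m e e = e" using eQ lQ unfolding loop_def by (elim conjE) blast
    have "m a a = m e e" using a(3) ee by simp
    then have "a = e" using inj_onD[OF inj _ aQ eQ] by simp
    then show False using a(2) by simp
  qed
qed

end
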